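(* The functor $G:\mathbf{cMet}_1\to{\rm PER}(\mathbf U)$, $G(X,d)=(X,d)$, $G(f)=[(x,y)\mapsto d(f(x),y)]$, preserves finite products.
   Context: $\mathbf{cMet}_1$: complete metric spaces with all distances $\le 1$ and uniformly continuous maps; its binary product is the set-theoretic product with the max-metric, its terminal object a one-point space. For functions $\alpha,\beta:Z\to[0,1]$ write $\alpha\sqsubseteq\beta$ if for every $\varepsilon>0$ there exists $\delta>0$ such that for all $z$, $\alpha(z)\le\delta$ implies $\beta(z)\le\varepsilon$. The category ${\rm PER}(\mathbf U)$, concretely: objects are pairs $(X,R)$ with $X$ a set and $R:X\times X\to[0,1]$ such that $R(x,y)\sqsubseteq R(y,x)$ (as functions of $(x,y)$) and $\max(R(x,y),R(y,z))\sqsubseteq R(x,z)$ (as functions of $(x,y,z)$). A functional relation $(X,R)\to(Y,S)$ is $F:X\times Y\to[0,1]$ with $F(x,y)\sqsubseteq\max(R(x,x),S(y,y))$, $\max(F(x,y),R(x,x'),S(y,y'))\sqsubseteq F(x',y')$, $\max(F(x,y),F(x,y'))\sqsubseteq S(y,y')$, and $R(x,x)\sqsubseteq\inf_{y\in Y}F(x,y)$ (each as functions of the displayed variables). Morphisms are classes $[F]$ with $F\sim F'$ iff $F\sqsubseteq F'$; composition of $[F]$ and $[H]$ is $[(x,z)\mapsto\inf_y\max(F(x,y),H(y,z))]$. *)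

theory Defs
  imports "HOL-Analysis.Analysis"
begin

definition cMet1 :: "'a set \<Rightarrow> ('a \<Rightarrow> 'a \<Rightarrow> real) \<Rightarrow> bool" where
  "cMet1 X d \<longleftrightarrow> Metric_space X d \<and> Metric_space.mcomplete X d \<and>
     (\<forall>x\<in>X. \<forall>y\<in>X. d x y \<le> 1)"

text \<open>Binary product in cMet_1: cartesian product with the max-metric.\<close>
definition maxdist :: "('a \<Rightarrow> 'a \<Rightarrow> real) \<Rightarrow> ('b \<Rightarrow> 'b \<Rightarrow> real) \<Rightarrow> ('a \<times> 'b) \<Rightarrow> ('a \<times> 'b) \<Rightarrow> real" where
  "maxdist d1 d2 p q = max (d1 (fst p) (fst q)) (d2 (snd p) (snd q))"

definition sqle :: "'z set \<Rightarrow> ('z \<Rightarrow> real) \<Rightarrow> ('z \<Rightarrow> real) \<Rightarrow> bool" where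
  "sqle Zs \<alpha> \<beta> \<longleftrightarrow> (\<forall>\<epsilon>>0. \<exists>\<delta>>0. \<forall>z\<in>Zs. \<alpha> z \<le> \<delta> \<longrightarrow> \<beta> z \<le> \<epsilon>)"

text \<open>Infimum over a set, values in [0,1]; the empty infimum is the top element 1.\<close>
definition inf01 :: "'y set \<Rightarrow> ('y \<Rightarrow> real) \<Rightarrow> real" where
  "inf01 Y f = (if Y = {} then 1 else (INF y\<in>Y. f y))"

definition per_obj :: "'a set \<Rightarrow> ('a \<Rightarrow> 'a \<Rightarrow> real) \<Rightarrow> bool" where
  "per_obj X R \<longleftrightarrow>
     (\<forall>x\<in>X. \<forall>y\<in>X. 0 \<le> R x y \<and> R x y \<le> 1) \<and>
     sqle (X \<times> X) (\<lambda>(x,y). R x y) (\<lambda>(x,y). R y x) \<and>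
     sqle (X \<times> X \<times> X) (\<lambda>(x,y,z). max (R x y) (R y z)) (\<lambda>(x,y,z). R x z)"

definition funrel :: "'a set \<Rightarrow> ('a \<Rightarrow> 'a \<Rightarrow> real) \<Rightarrow> 'b set \<Rightarrow> ('b \<Rightarrow> 'b \<Rightarrow> real)
    \<Rightarrow> ('a \<Rightarrow> 'b \<Rightarrow> real) \<Rightarrow> bool" where
  "funrel X R Y S F \<longleftrightarrow>
     (\<forall>x\<in>X. \<forall>y\<in>Y. 0 \<le> F x y \<and> F x y \<le> 1) \<and>
     sqle (X \<times> Y) (\<lambda>(x,y). F x y) (\<lambda>(x,y). max (R x x) (S y y)) \<and>
     sqle (X \<times> Y \<times> X \<times> Y) (\<lambda>(x,y,x',y'). max (F x y) (max (R x x') (S y y')))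
                             (\<lambda>(x,y,x',y'). F x' y') \<and>
     sqle (X \<times> Y \<times> Y) (\<lambda>(x,y,y'). max (F x y) (F x y')) (\<lambda>(x,y,y'). S y y') \<and>
     sqle X (\<lambda>x. R x x) (\<lambda>x. inf01 Y (\<lambda>y. F x y))"

text \<open>Equality of morphisms: [F] = [F'] iff F below-eq F'.\<close>
definition mor_eq :: "'a set \<Rightarrow> 'b set \<Rightarrow> ('a \<Rightarrow> 'b \<Rightarrow> real) \<Rightarrow> ('a \<Rightarrow> 'b \<Rightarrow> real) \<Rightarrow> bool" where
  "mor_eq X Y F F' \<longleftrightarrow> sqle (X \<times> Y) (\<lambda>(x,y). F x y) (\<lambda>(x,y). F' x y)"

text \<open>Composition: first F : X -> Y, then H : Y -> Z.\<close>
definition rcomp :: "'b set \<Rightarrow> ('a \<Rightarrow> 'b \<Rightarrow> real) \<Rightarrow> ('b \<Rightarrow> 'c \<Rightarrow> real) \<Rightarrow> 'a \<Rightarrow> 'c \<Rightarrow> real" where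
  "rcomp Y F H x z = inf01 Y (\<lambda>y. max (F x y) (H y z))"

definition Gmor :: "('b \<Rightarrow> 'b \<Rightarrow> real) \<Rightarrow> ('a \<Rightarrow> 'b) \<Rightarrow> 'a \<Rightarrow> 'b \<Rightarrow> real" where
  "Gmor dY f x y = dY (f x) y"

definition prod_univ_at :: "'z set \<Rightarrow> ('z \<Rightarrow> 'z \<Rightarrow> real) \<Rightarrow>
    'p set \<Rightarrow> ('p \<Rightarrow> 'p \<Rightarrow> real) \<Rightarrow> 'a set \<Rightarrow> ('a \<Rightarrow> 'a \<Rightarrow> real) \<Rightarrow>
    'b set \<Rightarrow> ('b \<Rightarrow> 'b \<Rightarrow> real) \<Rightarrow> ('p \<Rightarrow> 'a \<Rightarrow> real) \<Rightarrow> ('p \<Rightarrow> 'b \<Rightarrow> real) \<Rightarrow> bool" where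
  "prod_univ_at Z T P Rp A RA B RB P1 P2 \<longleftrightarrow>
     (per_obj Z T \<longrightarrow>
       (\<forall>F H. funrel Z T A RA F \<and> funrel Z T B RB H \<longrightarrow>
          (\<exists>K. funrel Z T P Rp K \<and> mor_eq Z A (rcomp P K P1) F \<and> mor_eq Z B (rcomp P K P2) H \<and>
             (\<forall>K'. funrel Z T P Rp K' \<and> mor_eq Z A (rcomp P K' P1) F \<and> mor_eq Z B (rcomp P K' P2) H
                   \<longrightarrow> mor_eq Z P K' K))))"

definition term_univ_at :: "'z set \<Rightarrow> ('z \<Rightarrow> 'z \<Rightarrow> real) \<Rightarrow> 'e set \<Rightarrow> ('e \<Rightarrow> 'e \<Rightarrow> real) \<Rightarrow> bool" where
  "term_univ_at Z T E RE \<longleftrightarrow>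
     (per_obj Z T \<longrightarrow>
       (\<exists>K. funrel Z T E RE K \<and> (\<forall>K'. funrel Z T E RE K' \<longrightarrow> mor_eq Z E K' K)))"

end

theory Submission
  imports Defs
begin

lemma sqle2: "sqle (A\<times>B) (\<lambda>(x,y). f x y) (\<lambda>(x,y). g x y) \<longleftrightarrow>
   (\<forall>\<epsilon>>0. \<exists>\<delta>>0. \<forall>x\<in>A. \<forall>y\<in>B. f x y \<le> \<delta> \<longrightarrow> g x y \<le> \<epsilon>)"
  by (auto simp: sqle_def)

lemma sqle3: "sqle (A\<times>B\<times>C) (\<lambda>(x,y,z). f x y z) (\<lambda>(x,y,z). g x y z) \<longleftrightarrow>
   (\<forall>\<epsilon>>0. \<exists>\<delta>>0. \<forall>x\<in>A. \<forall>y\<in>B. \<forall>z\<in>C. f x y z \<le> \<delta> \<longrightarrow> g x y z \<le> \<epsilon>)"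
  by (auto simp: sqle_def)

lemma sqle4: "sqle (A\<times>B\<times>C\<times>D) (\<lambda>(x,y,z,w). f x y z w) (\<lambda>(x,y,z,w). g x y z w) \<longleftrightarrow>
   (\<forall>\<epsilon>>0. \<exists>\<delta>>0. \<forall>x\<in>A. \<forall>y\<in>B. \<forall>z\<in>C. \<forall>w\<in>D. f x y z w \<le> \<delta> \<longrightarrow> g x y z w \<le> \<epsilon>)"
  by (auto simp: sqle_def)

lemma funrel_iff: "funrel X R Y S F \<longleftrightarrow>
     (\<forall>x\<in>X. \<forall>y\<in>Y. 0 \<le> F x y \<and> F x y \<le> 1) \<and>
     (\<forall>\<epsilon>>0. \<exists>\<delta>>0. \<forall>x\<in>X. \<forall>y\<in>Y. F x y \<le> \<delta> \<longrightarrow> max (R x x) (S y y) \<le> \<epsilon>) \<and>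
     (\<forall>\<epsilon>>0. \<exists>\<delta>>0. \<forall>x\<in>X. \<forall>y\<in>Y. \<forall>x'\<in>X. \<forall>y'\<in>Y.
         max (F x y) (max (R x x') (S y y')) \<le> \<delta> \<longrightarrow> F x' y' \<le> \<epsilon>) \<and>
     (\<forall>\<epsilon>>0. \<exists>\<delta>>0. \<forall>x\<in>X. \<forall>y\<in>Y. \<forall>y'\<in>Y. max (F x y) (F x y') \<le> \<delta> \<longrightarrow> S y y' \<le> \<epsilon>) \<and>
     (\<forall>\<epsilon>>0. \<exists>\<delta>>0. \<forall>x\<in>X. R x x \<le> \<delta> \<longrightarrow> inf01 Y (\<lambda>y. F x y) \<le> \<epsilon>)"
  unfolding funrel_def sqle2 sqle3 sqle4 by (simp add: sqle_def)

lemma per_obj_iff: "per_obj X R \<longleftrightarrow>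
     (\<forall>x\<in>X. \<forall>y\<in>X. 0 \<le> R x y \<and> R x y \<le> 1) \<and>
     (\<forall>\<epsilon>>0. \<exists>\<delta>>0. \<forall>x\<in>X. \<forall>y\<in>X. R x y \<le> \<delta> \<longrightarrow> R y x \<le> \<epsilon>) \<and>
     (\<forall>\<epsilon>>0. \<exists>\<delta>>0. \<forall>x\<in>X. \<forall>y\<in>X. \<forall>z\<in>X. max (R x y) (R y z) \<le> \<delta> \<longrightarrow> R x z \<le> \<epsilon>)"
  unfolding per_obj_def sqle2 sqle3 by simp

lemma mor_eq_iff: "mor_eq X Y F F' \<longleftrightarrow>
   (\<forall>\<epsilon>>0. \<exists>\<delta>>0. \<forall>x\<in>X. \<forall>y\<in>Y. F x y \<le> \<delta> \<longrightarrow> F' x y \<le> \<epsilon>)"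
  unfolding mor_eq_def sqle2 by simp

lemma inf01_le: "x \<in> Y \<Longrightarrow> (\<And>y. y \<in> Y \<Longrightarrow> 0 \<le> f y) \<Longrightarrow> inf01 Y f \<le> f x"
  unfolding inf01_def by (auto intro!: cINF_lower bdd_belowI[of _ 0])

lemma inf01_lt: "inf01 Y f < a \<Longrightarrow> a \<le> 1 \<Longrightarrow> (\<And>y. y \<in> Y \<Longrightarrow> 0 \<le> f y) \<Longrightarrow> \<exists>y\<in>Y. f y < a"
proof (cases "Y = {}")
  case False
  assume h: "inf01 Y f < a" "\<And>y. y \<in> Y \<Longrightarrow> 0 \<le> f y"
  have bb: "bdd_below (f ` Y)" using h(2) by (auto intro!: bdd_belowI[of _ 0])
  from h(1) False have "(INF y\<in>Y. f y) < a" by (simp add: inf01_def)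
  then show ?thesis using cINF_less_iff[OF False bb] by blast
qed (auto simp: inf01_def)

lemma inf01_unit: "inf01 {()} f = f ()"
  unfolding inf01_def by simp

lemma cm:
  assumes "cMet1 X d"
  shows "\<And>x y. 0 \<le> d x y" "\<And>x y. d x y = d y x" "\<And>x. x \<in> X \<Longrightarrow> d x x = 0"
    "\<And>x y z. x \<in> X \<Longrightarrow> y \<in> X \<Longrightarrow> z \<in> X \<Longrightarrow> d x z \<le> d x y + d y z"
    "\<And>x y. x \<in> X \<Longrightarrow> y \<in> X \<Longrightarrow> d x y \<le> 1"
  using assms unfolding cMet1_def
  by (auto simp: Metric_space.nonneg Metric_space.commute Metric_space.triangle Metric_space.mdist_zero)


lemma prod_per:
  assumes A: "cMet1 X d1" and B: "cMet1 Y d2"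
  shows "per_obj (X \<times> Y) (maxdist d1 d2)"
  unfolding per_obj_iff
proof (intro conjI)
  note a = cm[OF A] and b = cm[OF B]
  show "\<forall>x\<in>X \<times> Y. \<forall>y\<in>X \<times> Y. 0 \<le> maxdist d1 d2 x y \<and> maxdist d1 d2 x y \<le> 1"
    using a b by (auto simp: maxdist_def max_def)
  show "\<forall>\<epsilon>>0. \<exists>\<delta>>0. \<forall>x\<in>X \<times> Y. \<forall>y\<in>X \<times> Y. maxdist d1 d2 x y \<le> \<delta> \<longrightarrow> maxdist d1 d2 y x \<le> \<epsilon>"
    using a(2) b(2) by (auto simp: maxdist_def)
  show "\<forall>\<epsilon>>0. \<exists>\<delta>>0. \<forall>x\<in>X \<times> Y. \<forall>y\<in>X \<times> Y. \<forall>z\<in>X \<times> Y.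
      max (maxdist d1 d2 x y) (maxdist d1 d2 y z) \<le> \<delta> \<longrightarrow> maxdist d1 d2 x z \<le> \<epsilon>"
  proof (intro allI impI)
    fix \<epsilon> :: real assume e: "\<epsilon> > 0"
    show "\<exists>\<delta>>0. \<forall>x\<in>X \<times> Y. \<forall>y\<in>X \<times> Y. \<forall>z\<in>X \<times> Y.
      max (maxdist d1 d2 x y) (maxdist d1 d2 y z) \<le> \<delta> \<longrightarrow> maxdist d1 d2 x z \<le> \<epsilon>"
    proof (rule exI[of _ "\<epsilon>/2"], intro conjI ballI impI)
      fix x y z assume h: "x \<in> X \<times> Y" "y \<in> X \<times> Y" "z \<in> X \<times> Y"
        "max (maxdist d1 d2 x y) (maxdist d1 d2 y z) \<le> \<epsilon>/2"
      have 1: "d1 (fst x) (fst z) \<le> d1 (fst x) (fst y) + d1 (fst y) (fst z)"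
        using a(4) h by auto
      have 2: "d2 (snd x) (snd z) \<le> d2 (snd x) (snd y) + d2 (snd y) (snd z)"
        using b(4) h by auto
      show "maxdist d1 d2 x z \<le> \<epsilon>" using 1 2 h(4) by (auto simp: maxdist_def)
    qed (use e in auto)
  qed
qed


lemma proj_funrel:
  assumes A: "cMet1 X d" and pi: "\<And>p. p \<in> P \<Longrightarrow> \<pi> p \<in> X"
    and R0: "\<And>p. p \<in> P \<Longrightarrow> R p p = 0"
    and Rd: "\<And>p p'. p \<in> P \<Longrightarrow> p' \<in> P \<Longrightarrow> d (\<pi> p) (\<pi> p') \<le> R p p'"
  shows "funrel P R X d (Gmor d \<pi>)"
  unfolding funrel_iff Gmor_def
proof (intro conjI)
  note a = cm[OF A]
  show "\<forall>x\<in>P. \<forall>y\<in>X. 0 \<le> d (\<pi> x) y \<and> d (\<pi> x) y \<le> 1" using a pi by auto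
  show "\<forall>\<epsilon>>0. \<exists>\<delta>>0. \<forall>x\<in>P. \<forall>y\<in>X. d (\<pi> x) y \<le> \<delta> \<longrightarrow> max (R x x) (d y y) \<le> \<epsilon>"
    using a R0 by (auto intro!: exI[of _ 1])
  show "\<forall>\<epsilon>>0. \<exists>\<delta>>0. \<forall>x\<in>P. \<forall>y\<in>X. \<forall>x'\<in>P. \<forall>y'\<in>X.
         max (d (\<pi> x) y) (max (R x x') (d y y')) \<le> \<delta> \<longrightarrow> d (\<pi> x') y' \<le> \<epsilon>"
  proof (intro allI impI)
    fix \<epsilon> :: real assume e: "\<epsilon> > 0"
    show "\<exists>\<delta>>0. \<forall>x\<in>P. \<forall>y\<in>X. \<forall>x'\<in>P. \<forall>y'\<in>X.
         max (d (\<pi> x) y) (max (R x x') (d y y')) \<le> \<delta> \<longrightarrow> d (\<pi> x') y' \<le> \<epsilon>"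
    proof (rule exI[of _ "\<epsilon>/3"], intro conjI ballI impI)
      fix x y x' y' assume h: "x \<in> P" "y \<in> X" "x' \<in> P" "y' \<in> X"
        "max (d (\<pi> x) y) (max (R x x') (d y y')) \<le> \<epsilon>/3"
      have "d (\<pi> x') y' \<le> d (\<pi> x') (\<pi> x) + d (\<pi> x) y'" using a(4) h pi by blast
      moreover have "d (\<pi> x) y' \<le> d (\<pi> x) y + d y y'" using a(4) h pi by blast
      moreover have "d (\<pi> x') (\<pi> x) \<le> R x x'" using Rd[OF h(1,3)] a(2) by simp
      ultimately show "d (\<pi> x') y' \<le> \<epsilon>" using h(5) by auto
    qed (use e in auto)
  qed
  show "\<forall>\<epsilon>>0. \<exists>\<delta>>0. \<forall>x\<in>P. \<forall>y\<in>X. \<forall>y'\<in>X. max (d (\<pi> x) y) (d (\<pi> x) y') \<le> \<delta> \<longrightarrow> d y y' \<le> \<epsilon>"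
  proof (intro allI impI)
    fix \<epsilon> :: real assume e: "\<epsilon> > 0"
    show "\<exists>\<delta>>0. \<forall>x\<in>P. \<forall>y\<in>X. \<forall>y'\<in>X. max (d (\<pi> x) y) (d (\<pi> x) y') \<le> \<delta> \<longrightarrow> d y y' \<le> \<epsilon>"
    proof (rule exI[of _ "\<epsilon>/2"], intro conjI ballI impI)
      fix x y y' assume h: "x \<in> P" "y \<in> X" "y' \<in> X" "max (d (\<pi> x) y) (d (\<pi> x) y') \<le> \<epsilon>/2"
      have "d y y' \<le> d y (\<pi> x) + d (\<pi> x) y'" using a(4) h pi by blast
      then show "d y y' \<le> \<epsilon>" using h(4) a(2)[of y "\<pi> x"] by auto
    qed (use e in auto)
  qed
  show "\<forall>\<epsilon>>0. \<exists>\<delta>>0. \<forall>x\<in>P. R x x \<le> \<delta> \<longrightarrow> inf01 X (\<lambda>y. d (\<pi> x) y) \<le> \<epsilon>"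
  proof (intro allI impI exI[of _ 1] conjI ballI)
    fix \<epsilon> :: real and x assume e: "\<epsilon> > 0" and x: "x \<in> P"
    have "inf01 X (\<lambda>y. d (\<pi> x) y) \<le> d (\<pi> x) (\<pi> x)"
      by (rule inf01_le) (use pi x a in auto)
    then show "inf01 X (\<lambda>y. d (\<pi> x) y) \<le> \<epsilon>" using a(3) pi x e by simp
  qed simp
qed


lemma unit_per: "per_obj {()} (\<lambda>_ _. (0::real))"
  unfolding per_obj_iff by (auto intro: exI[of _ 1])

lemma term_univ: "term_univ_at Z T {()} (\<lambda>_ _. 0)"
  unfolding term_univ_at_def
proof
  assume P: "per_obj Z T"
  have T0: "\<forall>x\<in>Z. \<forall>y\<in>Z. 0 \<le> T x y \<and> T x y \<le> 1"
   and Ts: "\<forall>\<epsilon>>0. \<exists>\<delta>>0. \<forall>x\<in>Z. \<forall>y\<in>Z. T x y \<le> \<delta> \<longrightarrow> T y x \<le> \<epsilon>"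
   and Tt: "\<forall>\<epsilon>>0. \<exists>\<delta>>0. \<forall>x\<in>Z. \<forall>y\<in>Z. \<forall>z\<in>Z. max (T x y) (T y z) \<le> \<delta> \<longrightarrow> T x z \<le> \<epsilon>"
    using P unfolding per_obj_iff by auto
  let ?K = "\<lambda>z (u::unit). T z z"
  have "funrel Z T {()} (\<lambda>_ _. 0) ?K"
    unfolding funrel_iff inf01_unit
  proof (intro conjI)
    show "\<forall>x\<in>Z. \<forall>y\<in>{()}. 0 \<le> T x x \<and> T x x \<le> 1" using T0 by auto
    show "\<forall>\<epsilon>>0. \<exists>\<delta>>0. \<forall>x\<in>Z. \<forall>y\<in>{()}. T x x \<le> \<delta> \<longrightarrow> max (T x x) 0 \<le> \<epsilon>"
      by (auto simp: max_def)
    show "\<forall>\<epsilon>>0. \<exists>\<delta>>0. \<forall>x\<in>Z. \<forall>y\<in>{()}. \<forall>y'\<in>{()}. max (T x x) (T x x) \<le> \<delta> \<longrightarrow> 0 \<le> (\<epsilon>::real)"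
      by (intro allI impI exI[of _ "1::real"]) auto
    show "\<forall>\<epsilon>>0. \<exists>\<delta>>0. \<forall>x\<in>Z. T x x \<le> \<delta> \<longrightarrow> T x x \<le> \<epsilon>" by auto
    show "\<forall>\<epsilon>>0. \<exists>\<delta>>0. \<forall>x\<in>Z. \<forall>y\<in>{()}. \<forall>x'\<in>Z. \<forall>y'\<in>{()}.
           max (T x x) (max (T x x') 0) \<le> \<delta> \<longrightarrow> T x' x' \<le> \<epsilon>"
    proof (intro allI impI)
      fix \<epsilon> :: real assume e: "\<epsilon> > 0"
      obtain dt where dt: "dt > 0" "\<forall>x\<in>Z. \<forall>y\<in>Z. \<forall>z\<in>Z. max (T x y) (T y z) \<le> dt \<longrightarrow> T x z \<le> \<epsilon>"
        using Tt e by blast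
      obtain ds where ds: "ds > 0" "\<forall>x\<in>Z. \<forall>y\<in>Z. T x y \<le> ds \<longrightarrow> T y x \<le> dt"
        using Ts dt(1) by blast
      show "\<exists>\<delta>>0. \<forall>x\<in>Z. \<forall>y\<in>{()}. \<forall>x'\<in>Z. \<forall>y'\<in>{()}.
           max (T x x) (max (T x x') 0) \<le> \<delta> \<longrightarrow> T x' x' \<le> \<epsilon>"
      proof (rule exI[of _ "min dt ds"], intro conjI ballI impI)
        fix x y x' y' assume h: "x \<in> Z" "x' \<in> Z" "max (T x x) (max (T x x') 0) \<le> min dt ds"
        have "T x' x \<le> dt" using ds(2) h by auto
        then show "T x' x' \<le> \<epsilon>" using dt(2) h by auto
      qed (use dt ds in auto)
    qed
  qed
  moreover have "mor_eq Z {()} K' ?K" if K': "funrel Z T {()} (\<lambda>_ _. 0) K'" for K'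
  proof -
    have "\<forall>\<epsilon>>0. \<exists>\<delta>>0. \<forall>x\<in>Z. \<forall>y\<in>{()}. K' x y \<le> \<delta> \<longrightarrow> max (T x x) 0 \<le> \<epsilon>"
      using K' unfolding funrel_iff by blast
    then show ?thesis unfolding mor_eq_iff
    proof (intro allI impI)
      fix \<epsilon> :: real assume H: "\<forall>\<epsilon>>0. \<exists>\<delta>>0. \<forall>x\<in>Z. \<forall>y\<in>{()}. K' x y \<le> \<delta> \<longrightarrow> max (T x x) 0 \<le> \<epsilon>"
        and e: "\<epsilon> > 0"
      then obtain \<delta> where "\<delta> > 0" "\<forall>x\<in>Z. \<forall>y\<in>{()}. K' x y \<le> \<delta> \<longrightarrow> max (T x x) 0 \<le> \<epsilon>" by blast
      then show "\<exists>\<delta>>0. \<forall>x\<in>Z. \<forall>y\<in>{()}. K' x y \<le> \<delta> \<longrightarrow> T x x \<le> \<epsilon>"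
        by (intro exI[of _ \<delta>]) auto
    qed
  qed
  ultimately show "\<exists>K. funrel Z T {()} (\<lambda>_ _. 0) K \<and> (\<forall>K'. funrel Z T {()} (\<lambda>_ _. 0) K' \<longrightarrow> mor_eq Z {()} K' K)"
    by blast
qed


lemma K_funrel:
  assumes A: "cMet1 X d1" and B: "cMet1 Y d2"
    and F: "funrel Z T X d1 F" and H: "funrel Z T Y d2 H"
  shows "funrel Z T (X \<times> Y) (maxdist d1 d2) (\<lambda>z p. max (F z (fst p)) (H z (snd p)))"
  unfolding funrel_iff
proof (intro conjI)
  note a = cm[OF A] and b = cm[OF B]
  have F0: "\<forall>x\<in>Z. \<forall>y\<in>X. 0 \<le> F x y \<and> F x y \<le> 1"
   and F1: "\<forall>\<epsilon>>0. \<exists>\<delta>>0. \<forall>x\<in>Z. \<forall>y\<in>X. F x y \<le> \<delta> \<longrightarrow> max (T x x) (d1 y y) \<le> \<epsilon>"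
   and F2: "\<forall>\<epsilon>>0. \<exists>\<delta>>0. \<forall>x\<in>Z. \<forall>y\<in>X. \<forall>x'\<in>Z. \<forall>y'\<in>X.
         max (F x y) (max (T x x') (d1 y y')) \<le> \<delta> \<longrightarrow> F x' y' \<le> \<epsilon>"
   and F3: "\<forall>\<epsilon>>0. \<exists>\<delta>>0. \<forall>x\<in>Z. \<forall>y\<in>X. \<forall>y'\<in>X. max (F x y) (F x y') \<le> \<delta> \<longrightarrow> d1 y y' \<le> \<epsilon>"
   and F4: "\<forall>\<epsilon>>0. \<exists>\<delta>>0. \<forall>x\<in>Z. T x x \<le> \<delta> \<longrightarrow> inf01 X (\<lambda>y. F x y) \<le> \<epsilon>"
    using F unfolding funrel_iff by blast+
  have H0: "\<forall>x\<in>Z. \<forall>y\<in>Y. 0 \<le> H x y \<and> H x y \<le> 1"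
   and H1: "\<forall>\<epsilon>>0. \<exists>\<delta>>0. \<forall>x\<in>Z. \<forall>y\<in>Y. H x y \<le> \<delta> \<longrightarrow> max (T x x) (d2 y y) \<le> \<epsilon>"
   and H2: "\<forall>\<epsilon>>0. \<exists>\<delta>>0. \<forall>x\<in>Z. \<forall>y\<in>Y. \<forall>x'\<in>Z. \<forall>y'\<in>Y.
         max (H x y) (max (T x x') (d2 y y')) \<le> \<delta> \<longrightarrow> H x' y' \<le> \<epsilon>"
   and H3: "\<forall>\<epsilon>>0. \<exists>\<delta>>0. \<forall>x\<in>Z. \<forall>y\<in>Y. \<forall>y'\<in>Y. max (H x y) (H x y') \<le> \<delta> \<longrightarrow> d2 y y' \<le> \<epsilon>"
   and H4: "\<forall>\<epsilon>>0. \<exists>\<delta>>0. \<forall>x\<in>Z. T x x \<le> \<delta> \<longrightarrow> inf01 Y (\<lambda>y. H x y) \<le> \<epsilon>"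
    using H unfolding funrel_iff by blast+
  show "\<forall>x\<in>Z. \<forall>y\<in>X \<times> Y. 0 \<le> max (F x (fst y)) (H x (snd y)) \<and> max (F x (fst y)) (H x (snd y)) \<le> 1"
    using F0 H0 by (auto simp: le_max_iff_disj)
  show "\<forall>\<epsilon>>0. \<exists>\<delta>>0. \<forall>x\<in>Z. \<forall>y\<in>X \<times> Y. max (F x (fst y)) (H x (snd y)) \<le> \<delta> \<longrightarrow>
      max (T x x) (maxdist d1 d2 y y) \<le> \<epsilon>"
  proof (intro allI impI)
    fix \<epsilon> :: real assume e: "\<epsilon> > 0"
    then obtain \<delta> where d: "\<delta> > 0" "\<forall>x\<in>Z. \<forall>y\<in>X. F x y \<le> \<delta> \<longrightarrow> max (T x x) (d1 y y) \<le> \<epsilon>"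
      using F1 by blast
    show "\<exists>\<delta>>0. \<forall>x\<in>Z. \<forall>y\<in>X \<times> Y. max (F x (fst y)) (H x (snd y)) \<le> \<delta> \<longrightarrow>
      max (T x x) (maxdist d1 d2 y y) \<le> \<epsilon>"
    proof (rule exI[of _ \<delta>], intro conjI ballI impI)
      fix x p assume h: "x \<in> Z" "p \<in> X \<times> Y" "max (F x (fst p)) (H x (snd p)) \<le> \<delta>"
      then have "max (T x x) (d1 (fst p) (fst p)) \<le> \<epsilon>" using d(2) by auto
      then show "max (T x x) (maxdist d1 d2 p p) \<le> \<epsilon>"
        using h(2) a(3) b(3) e by (auto simp: maxdist_def)
    qed (use d in auto)
  qed
  show "\<forall>\<epsilon>>0. \<exists>\<delta>>0. \<forall>x\<in>Z. \<forall>y\<in>X \<times> Y. \<forall>x'\<in>Z. \<forall>y'\<in>X \<times> Y.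
     max (max (F x (fst y)) (H x (snd y))) (max (T x x') (maxdist d1 d2 y y')) \<le> \<delta> \<longrightarrow>
     max (F x' (fst y')) (H x' (snd y')) \<le> \<epsilon>"
  proof (intro allI impI)
    fix \<epsilon> :: real assume e: "\<epsilon> > 0"
    obtain \<delta>1 where d1: "\<delta>1 > 0" "\<forall>x\<in>Z. \<forall>y\<in>X. \<forall>x'\<in>Z. \<forall>y'\<in>X.
         max (F x y) (max (T x x') (d1 y y')) \<le> \<delta>1 \<longrightarrow> F x' y' \<le> \<epsilon>" using F2 e by blast
    obtain \<delta>2 where d2: "\<delta>2 > 0" "\<forall>x\<in>Z. \<forall>y\<in>Y. \<forall>x'\<in>Z. \<forall>y'\<in>Y.
         max (H x y) (max (T x x') (d2 y y')) \<le> \<delta>2 \<longrightarrow> H x' y' \<le> \<epsilon>" using H2 e by blast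
    show "\<exists>\<delta>>0. \<forall>x\<in>Z. \<forall>y\<in>X \<times> Y. \<forall>x'\<in>Z. \<forall>y'\<in>X \<times> Y.
     max (max (F x (fst y)) (H x (snd y))) (max (T x x') (maxdist d1 d2 y y')) \<le> \<delta> \<longrightarrow>
     max (F x' (fst y')) (H x' (snd y')) \<le> \<epsilon>"
    proof (rule exI[of _ "min \<delta>1 \<delta>2"], intro conjI ballI impI)
      fix x p x' p' assume h: "x \<in> Z" "p \<in> X \<times> Y" "x' \<in> Z" "p' \<in> X \<times> Y"
        "max (max (F x (fst p)) (H x (snd p))) (max (T x x') (maxdist d1 d2 p p')) \<le> min \<delta>1 \<delta>2"
      have "F x' (fst p') \<le> \<epsilon>" using d1(2) h by (auto simp: maxdist_def)
      moreover have "H x' (snd p') \<le> \<epsilon>" using d2(2) h by (auto simp: maxdist_def)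
      ultimately show "max (F x' (fst p')) (H x' (snd p')) \<le> \<epsilon>" by simp
    qed (use d1 d2 in auto)
  qed
  show "\<forall>\<epsilon>>0. \<exists>\<delta>>0. \<forall>x\<in>Z. \<forall>y\<in>X \<times> Y. \<forall>y'\<in>X \<times> Y.
     max (max (F x (fst y)) (H x (snd y))) (max (F x (fst y')) (H x (snd y'))) \<le> \<delta> \<longrightarrow>
     maxdist d1 d2 y y' \<le> \<epsilon>"
  proof (intro allI impI)
    fix \<epsilon> :: real assume e: "\<epsilon> > 0"
    obtain \<delta>1 where d1: "\<delta>1 > 0" "\<forall>x\<in>Z. \<forall>y\<in>X. \<forall>y'\<in>X. max (F x y) (F x y') \<le> \<delta>1 \<longrightarrow> d1 y y' \<le> \<epsilon>"
      using F3 e by blast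
    obtain \<delta>2 where d2: "\<delta>2 > 0" "\<forall>x\<in>Z. \<forall>y\<in>Y. \<forall>y'\<in>Y. max (H x y) (H x y') \<le> \<delta>2 \<longrightarrow> d2 y y' \<le> \<epsilon>"
      using H3 e by blast
    show "\<exists>\<delta>>0. \<forall>x\<in>Z. \<forall>y\<in>X \<times> Y. \<forall>y'\<in>X \<times> Y.
     max (max (F x (fst y)) (H x (snd y))) (max (F x (fst y')) (H x (snd y'))) \<le> \<delta> \<longrightarrow>
     maxdist d1 d2 y y' \<le> \<epsilon>"
    proof (rule exI[of _ "min \<delta>1 \<delta>2"], intro conjI ballI impI)
      fix x p p' assume h: "x \<in> Z" "p \<in> X \<times> Y" "p' \<in> X \<times> Y"
        "max (max (F x (fst p)) (H x (snd p))) (max (F x (fst p')) (H x (snd p'))) \<le> min \<delta>1 \<delta>2"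
      have "d1 (fst p) (fst p') \<le> \<epsilon>" using d1(2) h by auto
      moreover have "d2 (snd p) (snd p') \<le> \<epsilon>" using d2(2) h by auto
      ultimately show "maxdist d1 d2 p p' \<le> \<epsilon>" by (simp add: maxdist_def)
    qed (use d1 d2 in auto)
  qed
  show "\<forall>\<epsilon>>0. \<exists>\<delta>>0. \<forall>x\<in>Z. T x x \<le> \<delta> \<longrightarrow> inf01 (X \<times> Y) (\<lambda>y. max (F x (fst y)) (H x (snd y))) \<le> \<epsilon>"
  proof (intro allI impI)
    fix \<epsilon> :: real assume e: "\<epsilon> > 0"
    define e' where "e' = min (\<epsilon>/2) (1/2)"
    have e': "e' > 0" "e' < \<epsilon>" "e' < 1" using e by (auto simp: e'_def)
    obtain \<delta>1 where d1: "\<delta>1 > 0" "\<forall>x\<in>Z. T x x \<le> \<delta>1 \<longrightarrow> inf01 X (\<lambda>y. F x y) \<le> e'"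
      using F4 e' by blast
    obtain \<delta>2 where d2: "\<delta>2 > 0" "\<forall>x\<in>Z. T x x \<le> \<delta>2 \<longrightarrow> inf01 Y (\<lambda>y. H x y) \<le> e'"
      using H4 e' by blast
    show "\<exists>\<delta>>0. \<forall>x\<in>Z. T x x \<le> \<delta> \<longrightarrow> inf01 (X \<times> Y) (\<lambda>y. max (F x (fst y)) (H x (snd y))) \<le> \<epsilon>"
    proof (rule exI[of _ "min \<delta>1 \<delta>2"], intro conjI ballI impI)
      fix z assume z: "z \<in> Z" "T z z \<le> min \<delta>1 \<delta>2"
      have "inf01 X (\<lambda>y. F z y) < min \<epsilon> 1" using d1(2) z e' by force
      then obtain x where x0: "x \<in> X" "F z x < min \<epsilon> 1"
        using inf01_lt[of X "\<lambda>y. F z y" "min \<epsilon> 1"] F0 z by auto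
      then have x: "x \<in> X" "F z x < \<epsilon>" by auto
      have "inf01 Y (\<lambda>y. H z y) < min \<epsilon> 1" using d2(2) z e' by force
      then obtain y where y0: "y \<in> Y" "H z y < min \<epsilon> 1"
        using inf01_lt[of Y "\<lambda>y. H z y" "min \<epsilon> 1"] H0 z by auto
      then have y: "y \<in> Y" "H z y < \<epsilon>" by auto
      have "inf01 (X \<times> Y) (\<lambda>y. max (F z (fst y)) (H z (snd y))) \<le> max (F z x) (H z y)"
        using inf01_le[of "(x,y)" "X \<times> Y" "\<lambda>y. max (F z (fst y)) (H z (snd y))"] x y F0 H0 z
        by (force simp: le_max_iff_disj)
      then show "inf01 (X \<times> Y) (\<lambda>y. max (F z (fst y)) (H z (snd y))) \<le> \<epsilon>" using x y by simp
    qed (use d1 d2 in auto)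
  qed
qed


lemma comp_eq:
  assumes A: "cMet1 X d" and F: "funrel Z T X d F" and pi: "\<And>p. p \<in> P \<Longrightarrow> \<pi> p \<in> X"
    and Kge: "\<And>z p. z \<in> Z \<Longrightarrow> p \<in> P \<Longrightarrow> F z (\<pi> p) \<le> K z p"
  shows "mor_eq Z X (rcomp P K (Gmor d \<pi>)) F"
  unfolding mor_eq_iff
proof (intro allI impI)
  note a = cm[OF A]
  have F1: "\<forall>\<epsilon>>0. \<exists>\<delta>>0. \<forall>x\<in>Z. \<forall>y\<in>X. F x y \<le> \<delta> \<longrightarrow> max (T x x) (d y y) \<le> \<epsilon>"
   and F2: "\<forall>\<epsilon>>0. \<exists>\<delta>>0. \<forall>x\<in>Z. \<forall>y\<in>X. \<forall>x'\<in>Z. \<forall>y'\<in>X.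
         max (F x y) (max (T x x') (d y y')) \<le> \<delta> \<longrightarrow> F x' y' \<le> \<epsilon>"
    using F unfolding funrel_iff by blast+
  fix \<epsilon> :: real assume e: "\<epsilon> > 0"
  obtain \<delta>2 where d2: "\<delta>2 > 0" "\<forall>x\<in>Z. \<forall>y\<in>X. \<forall>x'\<in>Z. \<forall>y'\<in>X.
         max (F x y) (max (T x x') (d y y')) \<le> \<delta>2 \<longrightarrow> F x' y' \<le> \<epsilon>" using F2 e by blast
  obtain \<delta>1 where d1: "\<delta>1 > 0" "\<forall>x\<in>Z. \<forall>y\<in>X. F x y \<le> \<delta>1 \<longrightarrow> max (T x x) (d y y) \<le> \<delta>2"
    using F1 d2(1) by blast
  define \<delta> where "\<delta> = min (min \<delta>1 \<delta>2) (1/2) / 2"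
  have dp: "\<delta> > 0" "2*\<delta> \<le> 1" "2*\<delta> \<le> \<delta>1" "2*\<delta> \<le> \<delta>2" "\<delta> < 2 * \<delta>"
    using d1 d2 by (auto simp: \<delta>_def)
  show "\<exists>\<delta>>0. \<forall>x\<in>Z. \<forall>y\<in>X. rcomp P K (Gmor d \<pi>) x y \<le> \<delta> \<longrightarrow> F x y \<le> \<epsilon>"
  proof (rule exI[of _ \<delta>], intro conjI ballI impI)
    fix z x assume z: "z \<in> Z" and x: "x \<in> X" and h: "rcomp P K (Gmor d \<pi>) z x \<le> \<delta>"
    have "inf01 P (\<lambda>p. max (K z p) (d (\<pi> p) x)) < 2*\<delta>"
      using h dp by (simp add: rcomp_def Gmor_def)
    then obtain p where p: "p \<in> P" "max (K z p) (d (\<pi> p) x) < 2*\<delta>"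
      using inf01_lt[of P "\<lambda>p. max (K z p) (d (\<pi> p) x)" "2*\<delta>"] dp a(1)
      by (auto simp: le_max_iff_disj)
    have Fp: "F z (\<pi> p) < 2*\<delta>" using Kge[OF z p(1)] p(2) by auto
    then have "max (T z z) (d (\<pi> p) (\<pi> p)) \<le> \<delta>2" using d1(2) z pi[OF p(1)] dp by auto
    then have "T z z \<le> \<delta>2" by simp
    moreover have "d (\<pi> p) x \<le> \<delta>2" "F z (\<pi> p) \<le> \<delta>2" using p(2) Fp dp by auto
    ultimately show "F z x \<le> \<epsilon>" using d2(2) z x pi[OF p(1)] by auto
  qed (use dp in auto)
qed

lemma uniq_part:
  assumes A: "cMet1 X d" and pi: "\<And>p. p \<in> P \<Longrightarrow> \<pi> p \<in> X"
    and M: "mor_eq Z X (rcomp P K' (Gmor d \<pi>)) F"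
  shows "\<forall>\<epsilon>>0. \<exists>\<delta>>0. \<forall>z\<in>Z. \<forall>p\<in>P. K' z p \<le> \<delta> \<longrightarrow> F z (\<pi> p) \<le> \<epsilon>"
proof (intro allI impI)
  note a = cm[OF A]
  fix \<epsilon> :: real assume e: "\<epsilon> > 0"
  obtain \<delta> where d: "\<delta> > 0" "\<forall>x\<in>Z. \<forall>y\<in>X. rcomp P K' (Gmor d \<pi>) x y \<le> \<delta> \<longrightarrow> F x y \<le> \<epsilon>"
    using M e unfolding mor_eq_iff by blast
  show "\<exists>\<delta>>0. \<forall>z\<in>Z. \<forall>p\<in>P. K' z p \<le> \<delta> \<longrightarrow> F z (\<pi> p) \<le> \<epsilon>"
  proof (rule exI[of _ \<delta>], intro conjI ballI impI)
    fix z p assume z: "z \<in> Z" and p: "p \<in> P" and h: "K' z p \<le> \<delta>"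
    have "rcomp P K' (Gmor d \<pi>) z (\<pi> p) \<le> max (K' z p) (d (\<pi> p) (\<pi> p))"
      unfolding rcomp_def Gmor_def
      by (rule inf01_le[OF p]) (simp add: a(1) le_max_iff_disj)
    also have "\<dots> \<le> \<delta>" using a(3)[OF pi[OF p]] h d(1) by simp
    finally show "F z (\<pi> p) \<le> \<epsilon>" using d(2) z pi[OF p] h by auto
  qed (use d in auto)
qed


lemma prod_univ:
  assumes A: "cMet1 X d1" and B: "cMet1 Y d2"
  shows "prod_univ_at Z T (X \<times> Y) (maxdist d1 d2) X d1 Y d2 (Gmor d1 fst) (Gmor d2 snd)"
  unfolding prod_univ_at_def
proof (intro impI allI)
  fix F H assume FH: "funrel Z T X d1 F \<and> funrel Z T Y d2 H"
  let ?K = "\<lambda>z p. max (F z (fst p)) (H z (snd p))"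
  have Kf: "funrel Z T (X \<times> Y) (maxdist d1 d2) ?K" using K_funrel[OF A B] FH by blast
  have c1: "mor_eq Z X (rcomp (X \<times> Y) ?K (Gmor d1 fst)) F"
    by (rule comp_eq[OF A]) (use FH in auto)
  have c2: "mor_eq Z Y (rcomp (X \<times> Y) ?K (Gmor d2 snd)) H"
    by (rule comp_eq[OF B]) (use FH in auto)
  have u: "mor_eq Z (X \<times> Y) K' ?K"
    if h: "funrel Z T (X \<times> Y) (maxdist d1 d2) K' \<and> mor_eq Z X (rcomp (X \<times> Y) K' (Gmor d1 fst)) F
       \<and> mor_eq Z Y (rcomp (X \<times> Y) K' (Gmor d2 snd)) H" for K'
    unfolding mor_eq_iff
  proof (intro allI impI)
    fix \<epsilon> :: real assume e: "\<epsilon> > 0"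
    obtain \<delta>1 where d1: "\<delta>1 > 0" "\<forall>z\<in>Z. \<forall>p\<in>X \<times> Y. K' z p \<le> \<delta>1 \<longrightarrow> F z (fst p) \<le> \<epsilon>"
      using uniq_part[OF A, of "X \<times> Y" fst Z K' F] h e by fastforce
    obtain \<delta>2 where d2: "\<delta>2 > 0" "\<forall>z\<in>Z. \<forall>p\<in>X \<times> Y. K' z p \<le> \<delta>2 \<longrightarrow> H z (snd p) \<le> \<epsilon>"
      using uniq_part[OF B, of "X \<times> Y" snd Z K' H] h e by fastforce
    show "\<exists>\<delta>>0. \<forall>x\<in>Z. \<forall>y\<in>X \<times> Y. K' x y \<le> \<delta> \<longrightarrow> ?K x y \<le> \<epsilon>"
      by (rule exI[of _ "min \<delta>1 \<delta>2"]) (use d1 d2 in auto)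
  qed
  show "\<exists>K. funrel Z T (X \<times> Y) (maxdist d1 d2) K \<and>
             mor_eq Z X (rcomp (X \<times> Y) K (Gmor d1 fst)) F \<and>
             mor_eq Z Y (rcomp (X \<times> Y) K (Gmor d2 snd)) H \<and>
             (\<forall>K'. funrel Z T (X \<times> Y) (maxdist d1 d2) K' \<and>
                   mor_eq Z X (rcomp (X \<times> Y) K' (Gmor d1 fst)) F \<and>
                   mor_eq Z Y (rcomp (X \<times> Y) K' (Gmor d2 snd)) H \<longrightarrow>
                   mor_eq Z (X \<times> Y) K' K)"
    using Kf c1 c2 u by blast
qed

theorem mainTheorem17:
  fixes X :: "'a set" and d1 :: "'a \<Rightarrow> 'a \<Rightarrow> real"
    and Y :: "'b set" and d2 :: "'b \<Rightarrow> 'b \<Rightarrow> real"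
    and Z :: "'z set" and T :: "'z \<Rightarrow> 'z \<Rightarrow> real"
  assumes "cMet1 X d1" and "cMet1 Y d2"
  shows "per_obj (X \<times> Y) (maxdist d1 d2)
       \<and> funrel (X \<times> Y) (maxdist d1 d2) X d1 (Gmor d1 fst)
       \<and> funrel (X \<times> Y) (maxdist d1 d2) Y d2 (Gmor d2 snd)
       \<and> prod_univ_at Z T (X \<times> Y) (maxdist d1 d2) X d1 Y d2 (Gmor d1 fst) (Gmor d2 snd)
       \<and> per_obj {()} (\<lambda>_ _. 0)
       \<and> term_univ_at Z T {()} (\<lambda>_ _. 0)"
proof (intro conjI)
  note a = cm[OF assms(1)] and b = cm[OF assms(2)]
  show "per_obj (X \<times> Y) (maxdist d1 d2)" by (rule prod_per[OF assms])
  show "funrel (X \<times> Y) (maxdist d1 d2) X d1 (Gmor d1 fst)"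
    by (rule proj_funrel[OF assms(1)]) (auto simp: maxdist_def a b)
  show "funrel (X \<times> Y) (maxdist d1 d2) Y d2 (Gmor d2 snd)"
    by (rule proj_funrel[OF assms(2)]) (auto simp: maxdist_def a b)
  show "prod_univ_at Z T (X \<times> Y) (maxdist d1 d2) X d1 Y d2 (Gmor d1 fst) (Gmor d2 snd)"
    by (rule prod_univ[OF assms])
  show "per_obj {()} (\<lambda>_ _. 0)" by (rule unit_per)
  show "term_univ_at Z T {()} (\<lambda>_ _. 0)" by (rule term_univ)
qed

end
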